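(* Let $\varphi=(\mathfrak{m}_1,\dots,\mathfrak{m}_\ell)$ be a normalizer-adapted decomposition. Fix $1\le p\le\ell_0$ and $1\le i\le\ell$. If there exists $1\le j\le\ell$ with $[pij]>0$, then $[pik]=0$ for every $k\in\{1,\dots,\ell\}\setminus\{j\}$. Consequently $\mathfrak{m}_i\simeq\mathfrak{m}_j$ as $\mathrm{Ad}(\mathsf{H})$-modules and $\mathrm{ad}(V_p)(\mathfrak{m}_i)=\mathfrak{m}_j$.
   Context: $M=\mathsf{G}/\mathsf{H}$ almost-effective, $\mathsf{G},\mathsf{H}$ compact connected; $Q$ an $\mathrm{Ad}(\mathsf{G})$-invariant inner product on $\mathfrak{g}$, $\mathfrak{m}=\mathfrak{h}^{\perp_Q}$, $\mathfrak{m}_0=\{X\in\mathfrak{m}:[\mathfrak{h},X]=0\}$. $\varphi=(\mathfrak{m}_1,\dots,\mathfrak{m}_\ell)$ is an ordered $Q$-orthogonal decomposition of $\mathfrak{m}$ into irreducible $\mathrm{Ad}(\mathsf{H})$-submodules, ordered so that $\mathfrak{m}_0=\mathfrak{m}_1+\dots+\mathfrak{m}_{\ell_0}$ with $\dim\mathfrak{m}_p=1$ for $p\le\ell_0$; $V_p\in\mathfrak{m}_p$ with $Q(V_p,V_p)=1$. $[ijk]=\sum Q([e_\alpha,e_\beta],e_\gamma)^2$ over a $Q$-orthonormal $\varphi$-adapted basis with $e_\alpha\in\mathfrak{m}_i,e_\beta\in\mathfrak{m}_j,e_\gamma\in\mathfrak{m}_k$. $\varphi$ is normalizer-adapted if for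 every $1\le p\le\ell_0$ and $1\le i\le\ell$ with $[\mathfrak{m}_p,\mathfrak{m}_i]\ne\{0\}$ there is $j$ with $[\mathfrak{m}_p,\mathfrak{m}_i]\cap\mathfrak{m}_j\neq\{0\}$. *)

theory Defs
  imports "HOL-Analysis.Analysis"
begin

text \<open>The Lie algebra g of the compact connected group G is
  a finite-dimensional real inner product space (type 'a :: euclidean_space) whose
  inner product plays the role of the Ad(G)-invariant inner product Q; br is the
  Lie bracket; h is the Lie algebra of H.\<close>

definition compact_lie_algebra :: "('a::euclidean_space \<Rightarrow> 'a \<Rightarrow> 'a) \<Rightarrow> bool" where
  "compact_lie_algebra br \<longleftrightarrow>
     bilinear br \<and>
     (\<forall>x y. br x y = - br y x) \<and>
     (\<forall>x y z. br x (br y z) + br y (br z x) + br z (br x y) = 0) \<and>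
     (\<forall>x y z. inner (br x y) z + inner y (br x z) = 0)"

definition lie_subalgebra :: "('a::euclidean_space \<Rightarrow> 'a \<Rightarrow> 'a) \<Rightarrow> 'a set \<Rightarrow> bool" where
  "lie_subalgebra br h \<longleftrightarrow> subspace h \<and> (\<forall>x\<in>h. \<forall>y\<in>h. br x y \<in> h)"

text \<open>Ideals of g; almost-effectiveness of G/H means h contains no nonzero ideal of g.\<close>
definition lie_ideal :: "('a::euclidean_space \<Rightarrow> 'a \<Rightarrow> 'a) \<Rightarrow> 'a set \<Rightarrow> bool" where
  "lie_ideal br I \<longleftrightarrow> subspace I \<and> (\<forall>x. \<forall>y\<in>I. br x y \<in> I)"

definition almost_effective :: "('a::euclidean_space \<Rightarrow> 'a \<Rightarrow> 'a) \<Rightarrow> 'a set \<Rightarrow> bool" where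
  "almost_effective br h \<longleftrightarrow> (\<forall>I. lie_ideal br I \<and> I \<subseteq> h \<longrightarrow> I = {0})"

definition mcomp :: "'a::euclidean_space set \<Rightarrow> 'a set" where
  "mcomp h = {x. \<forall>y\<in>h. inner x y = 0}"

definition mzero :: "('a::euclidean_space \<Rightarrow> 'a \<Rightarrow> 'a) \<Rightarrow> 'a set \<Rightarrow> 'a set" where
  "mzero br h = {x \<in> mcomp h. \<forall>y\<in>h. br y x = 0}"

text \<open>Ad(H)-submodules (H connected: equivalently ad(h)-invariant subspaces).\<close>
definition h_submodule :: "('a::euclidean_space \<Rightarrow> 'a \<Rightarrow> 'a) \<Rightarrow> 'a set \<Rightarrow> 'a set \<Rightarrow> bool" where
  "h_submodule br h W \<longleftrightarrow> subspace W \<and> (\<forall>y\<in>h. \<forall>x\<in>W. br y x \<in> W)"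

definition h_irreducible :: "('a::euclidean_space \<Rightarrow> 'a \<Rightarrow> 'a) \<Rightarrow> 'a set \<Rightarrow> 'a set \<Rightarrow> bool" where
  "h_irreducible br h W \<longleftrightarrow> h_submodule br h W \<and> W \<noteq> {0} \<and>
     (\<forall>U. h_submodule br h U \<and> U \<subseteq> W \<longrightarrow> U = {0} \<or> U = W)"

definition h_module_iso :: "('a::euclidean_space \<Rightarrow> 'a \<Rightarrow> 'a) \<Rightarrow> 'a set \<Rightarrow> 'a set \<Rightarrow> 'a set \<Rightarrow> bool" where
  "h_module_iso br h A B \<longleftrightarrow>
     (\<exists>f. linear f \<and> bij_betw f A B \<and> (\<forall>y\<in>h. \<forall>x\<in>A. f (br y x) = br y (f x)))"

definition decomposition ::
  "('a::euclidean_space \<Rightarrow> 'a \<Rightarrow> 'a) \<Rightarrow> 'a set \<Rightarrow> (nat \<Rightarrow> 'a set) \<Rightarrow> nat \<Rightarrow> nat \<Rightarrow> bool" where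
  "decomposition br h ms l l0 \<longleftrightarrow>
     (\<forall>i\<in>{1..l}. h_irreducible br h (ms i) \<and> ms i \<subseteq> mcomp h) \<and>
     (\<forall>i\<in>{1..l}. \<forall>j\<in>{1..l}. i \<noteq> j \<longrightarrow> (\<forall>x\<in>ms i. \<forall>y\<in>ms j. inner x y = 0)) \<and>
     span (\<Union>i\<in>{1..l}. ms i) = mcomp h \<and>
     l0 \<le> l \<and>
     (\<forall>p\<in>{1..l0}. dim (ms p) = 1) \<and>
     span (\<Union>p\<in>{1..l0}. ms p) = mzero br h"

definition bracket_space :: "('a::euclidean_space \<Rightarrow> 'a \<Rightarrow> 'a) \<Rightarrow> 'a set \<Rightarrow> 'a set \<Rightarrow> 'a set" where
  "bracket_space br A B = span {br x y | x y. x \<in> A \<and> y \<in> B}"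

definition normalizer_adapted ::
  "('a::euclidean_space \<Rightarrow> 'a \<Rightarrow> 'a) \<Rightarrow> 'a set \<Rightarrow> (nat \<Rightarrow> 'a set) \<Rightarrow> nat \<Rightarrow> nat \<Rightarrow> bool" where
  "normalizer_adapted br h ms l l0 \<longleftrightarrow>
     decomposition br h ms l l0 \<and>
     (\<forall>p\<in>{1..l0}. \<forall>i\<in>{1..l}. bracket_space br (ms p) (ms i) \<noteq> {0} \<longrightarrow>
        (\<exists>j\<in>{1..l}. bracket_space br (ms p) (ms i) \<inter> ms j \<noteq> {0}))"

definition is_onb :: "'a::euclidean_space set \<Rightarrow> 'a set \<Rightarrow> bool" where
  "is_onb S B \<longleftrightarrow> finite B \<and> B \<subseteq> S \<and> span B = S \<and> pairwise orthogonal B \<and>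
     (\<forall>b\<in>B. norm b = 1)"

definition onb :: "'a::euclidean_space set \<Rightarrow> 'a set" where
  "onb S = (SOME B. is_onb S B)"

definition struct_const ::
  "('a::euclidean_space \<Rightarrow> 'a \<Rightarrow> 'a) \<Rightarrow> (nat \<Rightarrow> 'a set) \<Rightarrow> nat \<Rightarrow> nat \<Rightarrow> nat \<Rightarrow> real" where
  "struct_const br ms i j k =
     (\<Sum>a\<in>onb (ms i). \<Sum>b\<in>onb (ms j). \<Sum>c\<in>onb (ms k). (inner (br a b) c)\<^sup>2)"

end

theory Submission
  imports Defs
begin

lemma onb_props:
  fixes S :: "'a::euclidean_space set"
  assumes "subspace S"
  shows "is_onb S (onb S)"
proof -
  obtain B where "B \<subseteq> S" "pairwise orthogonal B" "\<And>x. x \<in> B \<Longrightarrow> norm x = 1"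
    "independent B" "card B = dim S" "span B = S"
    using orthonormal_basis_subspace[OF assms] by metis
  then have "is_onb S B" unfolding is_onb_def using independent_imp_finite by blast
  then show ?thesis unfolding onb_def by (rule someI)
qed

theorem lemma5p2:
  fixes br :: "'a::euclidean_space \<Rightarrow> 'a \<Rightarrow> 'a"
    and h :: "'a set" and ms :: "nat \<Rightarrow> 'a set" and l l0 p i j :: nat and V :: 'a
  assumes "compact_lie_algebra br"
    and "lie_subalgebra br h"
    and "almost_effective br h"
    and "normalizer_adapted br h ms l l0"
    and "p \<in> {1..l0}" and "i \<in> {1..l}"
    and "V \<in> ms p" and "inner V V = 1"
    and "j \<in> {1..l}" and "struct_const br ms p i j > 0"
  shows "(\<forall>k\<in>{1..l} - {j}. struct_const br ms p i k = 0) \<and>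
         h_module_iso br h (ms i) (ms j) \<and>
         br V ` ms i = ms j"
proof -
  note C = assms(1)[unfolded compact_lie_algebra_def]
  have bil: "bilinear br" using C by (rule conjunct1)
  have skew: "\<And>x y. br x y = - br y x" using conjunct1[OF conjunct2[OF C]] by blast
  have jac: "\<And>x y z. br x (br y z) + br y (br z x) + br z (br x y) = 0"
    using conjunct1[OF conjunct2[OF conjunct2[OF C]]] by blast
  have dec: "decomposition br h ms l l0" and na: "\<forall>p\<in>{1..l0}. \<forall>i\<in>{1..l}. bracket_space br (ms p) (ms i) \<noteq> {0} \<longrightarrow>
        (\<exists>j\<in>{1..l}. bracket_space br (ms p) (ms i) \<inter> ms j \<noteq> {0})"
    using assms(4) unfolding normalizer_adapted_def by auto
  have irr: "\<And>k. k \<in> {1..l} \<Longrightarrow> h_irreducible br h (ms k)"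
    using dec unfolding decomposition_def by auto
  have orth: "\<And>k k' x y. k \<in> {1..l} \<Longrightarrow> k' \<in> {1..l} \<Longrightarrow> k \<noteq> k' \<Longrightarrow> x \<in> ms k \<Longrightarrow> y \<in> ms k' \<Longrightarrow> inner x y = 0"
    using dec unfolding decomposition_def by blast
  have l0l: "l0 \<le> l" and dimp: "dim (ms p) = 1"
    using dec assms(5) unfolding decomposition_def by auto
  have mz: "span (\<Union>p\<in>{1..l0}. ms p) = mzero br h"
    using dec unfolding decomposition_def by auto
  have pl: "p \<in> {1..l}" using assms(5) l0l by auto
  have sub: "\<And>k. k \<in> {1..l} \<Longrightarrow> subspace (ms k)"
    using irr unfolding h_irreducible_def h_submodule_def by auto
  have inv: "\<And>k y x. k \<in> {1..l} \<Longrightarrow> y \<in> h \<Longrightarrow> x \<in> ms k \<Longrightarrow> br y x \<in> ms k"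
    using irr unfolding h_irreducible_def h_submodule_def by auto
  have irrU: "\<And>k U. k \<in> {1..l} \<Longrightarrow> h_submodule br h U \<Longrightarrow> U \<subseteq> ms k \<Longrightarrow> U = {0} \<or> U = ms k"
    using irr unfolding h_irreducible_def by blast
  have V0: "V \<noteq> 0" using assms(8) by auto
  have "V \<in> (\<Union>p\<in>{1..l0}. ms p)" using assms(5,7) by blast
  then have "V \<in> mzero br h" unfolding mz[symmetric] by (rule span_base)
  then have Vh: "\<And>y. y \<in> h \<Longrightarrow> br y V = 0" unfolding mzero_def by auto
  have linV: "linear (br V)" using bil unfolding bilinear_def by auto
  have comm: "\<And>y x. y \<in> h \<Longrightarrow> br y (br V x) = br V (br y x)"
  proof -
    fix y x assume y: "y \<in> h"
    have "br y (br V x) + br V (br x y) + br x (br y V) = 0" by (rule jac)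
    moreover have "br x (br y V) = 0" using Vh[OF y] bilinear_rzero[OF bil] by simp
    moreover have "br V (br x y) = - br V (br y x)"
      using skew[of x y] bilinear_rneg[OF bil] by simp
    ultimately show "br y (br V x) = br V (br y x)" by (simp add: algebra_simps)
  qed
  have spanV: "span {V} = ms p"
  proof -
    have "span {V} = span (ms p)"
      by (rule dim_eq_span) (use assms(7) dimp V0 in auto)
    then show ?thesis using sub[OF pl] by simp
  qed
  have scal: "\<And>a. a \<in> ms p \<Longrightarrow> \<exists>t. a = t *\<^sub>R V"
    using spanV span_singleton by (metis UNIV_I image_iff)
  define W where "W = br V ` ms i"
  have subW: "subspace W" unfolding W_def
    using linear_subspace_image[OF linV sub[OF assms(6)]] .
  have Wmod: "\<And>y w. y \<in> h \<Longrightarrow> w \<in> W \<Longrightarrow> br y w \<in> W"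
    unfolding W_def using comm inv[OF assms(6)] by auto
  have onbk: "\<And>k. k \<in> {1..l} \<Longrightarrow> is_onb (ms k) (onb (ms k))"
    using sub onb_props by blast
  have onbsub: "\<And>k. k \<in> {1..l} \<Longrightarrow> onb (ms k) \<subseteq> ms k"
    using onbk unfolding is_onb_def by auto
  have termzero: "\<And>k. k \<in> {1..l} \<Longrightarrow> (\<And>a b c. a \<in> ms p \<Longrightarrow> b \<in> ms i \<Longrightarrow> c \<in> ms k \<Longrightarrow> inner (br a b) c = 0)
      \<Longrightarrow> struct_const br ms p i k = 0"
  proof -
    fix k assume k: "k \<in> {1..l}" and z: "\<And>a b c. a \<in> ms p \<Longrightarrow> b \<in> ms i \<Longrightarrow> c \<in> ms k \<Longrightarrow> inner (br a b) c = 0"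
    show "struct_const br ms p i k = 0" unfolding struct_const_def
      apply (rule sum.neutral, rule ballI)+
      using z onbsub[OF pl] onbsub[OF assms(6)] onbsub[OF k] by (simp add: subset_iff)
  qed
  obtain a b c where abc: "a \<in> ms p" "b \<in> ms i" "c \<in> ms j" "inner (br a b) c \<noteq> 0"
    using termzero[OF assms(9)] assms(10) by force
  obtain t where t: "a = t *\<^sub>R V" using scal abc(1) by blast
  have Wa: "br a b \<in> W" unfolding W_def t bilinear_lmul[OF bil]
    using bilinear_rmul[OF bil] sub[OF assms(6)] abc(2)
    by (metis image_eqI subspace_scale)
  have brab0: "br a b \<noteq> 0" using abc(4) by auto
  have BS: "bracket_space br (ms p) (ms i) = W"
  proof -
    define S where "S = {br x y | x y. x \<in> ms p \<and> y \<in> ms i}"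
    have A: "S \<subseteq> W"
    proof
      fix z assume "z \<in> S"
      then obtain x y where z: "z = br x y" and x: "x \<in> ms p" and y: "y \<in> ms i" unfolding S_def by blast
      obtain s where "x = s *\<^sub>R V" using scal x by blast
      then show "z \<in> W" unfolding W_def z
        using bilinear_lmul[OF bil] bilinear_rmul[OF bil] sub[OF assms(6)] y
        by (metis image_eqI subspace_scale)
    qed
    have B: "W \<subseteq> S"
      unfolding W_def S_def using assms(7) by blast
    have "span S = W"
    proof (rule subset_antisym)
      show "span S \<subseteq> W" by (rule span_minimal[OF A subW])
      show "W \<subseteq> span S" using B span_superset[of S] by (rule subset_trans)
    qed
    then show ?thesis unfolding bracket_space_def S_def .
  qed
  have "W \<noteq> {0}" using Wa brab0 by auto
  then obtain j' where j': "j' \<in> {1..l}" "W \<inter> ms j' \<noteq> {0}"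
    using na assms(5,6) BS by metis
  define U where "U = ms i \<inter> (br V -` ms j')"
  have Umod: "h_submodule br h U" unfolding h_submodule_def
  proof
    show "subspace U" unfolding U_def
      by (rule subspace_inter[OF sub[OF assms(6)] linear_subspace_vimage[OF linV sub[OF j'(1)]]])
    show "\<forall>y\<in>h. \<forall>x\<in>U. br y x \<in> U"
    proof (intro ballI)
      fix y x assume y: "y \<in> h" and x: "x \<in> U"
      have x1: "x \<in> ms i" and x2: "br V x \<in> ms j'" using x unfolding U_def by auto
      have "br y x \<in> ms i" using inv[OF assms(6) y x1] .
      moreover have "br V (br y x) \<in> ms j'" using inv[OF j'(1) y x2] comm[OF y, of x] by simp
      ultimately show "br y x \<in> U" unfolding U_def by simp
    qed
  qed
  obtain w where w: "w \<in> W" "w \<in> ms j'" "w \<noteq> 0"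
    using j'(2) subspace_0[OF subW] subspace_0[OF sub[OF j'(1)]] by blast
  obtain x where x: "x \<in> ms i" "w = br V x" using w(1) unfolding W_def by blast
  have xU: "x \<in> U" unfolding U_def using x w by simp
  have "x \<noteq> 0" using x w linear_0[OF linV] by metis
  then have "U \<noteq> {0}" using xU by blast
  moreover have "U \<subseteq> ms i" unfolding U_def by blast
  ultimately have "U = ms i" using irrU[OF assms(6) Umod] by blast
  then have WsubJ: "W \<subseteq> ms j'" unfolding W_def U_def by blast
  have WJmod: "h_submodule br h (W \<inter> ms j')" unfolding h_submodule_def
    using subspace_inter[OF subW sub[OF j'(1)]] Wmod inv[OF j'(1)] by blast
  have "W \<inter> ms j' = ms j'"
    using irrU[OF j'(1) WJmod] j'(2) by blast
  then have WJ: "W = ms j'" using WsubJ by auto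
  have jj: "j' = j"
  proof (rule ccontr)
    assume "j' \<noteq> j"
    then have "inner (br a b) c = 0" using orth[OF j'(1) assms(9)] Wa WJ abc(3) by auto
    then show False using abc(4) by simp
  qed
  have WJ2: "W = ms j" using WJ jj by simp
  have part1: "\<forall>k\<in>{1..l} - {j}. struct_const br ms p i k = 0"
  proof
    fix k assume k: "k \<in> {1..l} - {j}"
    show "struct_const br ms p i k = 0"
    proof (rule termzero)
      show "k \<in> {1..l}" using k by auto
      fix x y z assume x: "x \<in> ms p" and y: "y \<in> ms i" and z: "z \<in> ms k"
      obtain s where "x = s *\<^sub>R V" using scal x by blast
      then have "br x y \<in> W" unfolding W_def
        using bilinear_lmul[OF bil] bilinear_rmul[OF bil] sub[OF assms(6)] y
        by (metis image_eqI subspace_scale)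
      then show "inner (br x y) z = 0" using orth[OF assms(9), of k] k z WJ2 by auto
    qed
  qed
  define K where "K = ms i \<inter> (br V -` {0})"
  have Kmod: "h_submodule br h K" unfolding h_submodule_def
  proof
    show "subspace K" unfolding K_def
      by (rule subspace_inter[OF sub[OF assms(6)] linear_subspace_vimage[OF linV subspace_single_0]])
    show "\<forall>y\<in>h. \<forall>x\<in>K. br y x \<in> K"
    proof (intro ballI)
      fix y x assume y: "y \<in> h" and x: "x \<in> K"
      have x1: "x \<in> ms i" and x2: "br V x = 0" using x unfolding K_def by auto
      have "br y x \<in> ms i" using inv[OF assms(6) y x1] .
      moreover have "br V (br y x) = 0" using comm[OF y, of x] x2 bilinear_rzero[OF bil] by metis
      ultimately show "br y x \<in> K" unfolding K_def by simp
    qed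
  qed
  have "K \<noteq> ms i"
  proof
    assume "K = ms i"
    then have "br V b = 0" using abc(2) unfolding K_def by blast
    then have "br a b = 0" unfolding t bilinear_lmul[OF bil] by simp
    then show False using brab0 by blast
  qed
  moreover have "K \<subseteq> ms i" unfolding K_def by blast
  ultimately have K0: "K = {0}" using irrU[OF assms(6) Kmod] by blast
  have injV: "inj_on (br V) (ms i)"
  proof (rule inj_onI)
    fix x y assume x: "x \<in> ms i" and y: "y \<in> ms i" and e: "br V x = br V y"
    have "x - y \<in> ms i" using subspace_diff[OF sub[OF assms(6)] x y] .
    moreover have "br V (x - y) = 0" using linear_diff[OF linV, of x y] e by simp
    ultimately have "x - y \<in> K" unfolding K_def by simp
    then show "x = y" using K0 by simp
  qed
  have bij: "bij_betw (br V) (ms i) (ms j)"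
    unfolding bij_betw_def using injV WJ2 unfolding W_def by blast
  have iso: "h_module_iso br h (ms i) (ms j)" unfolding h_module_iso_def
  proof (intro exI conjI ballI)
    show "linear (br V)" by (rule linV)
    show "bij_betw (br V) (ms i) (ms j)" by (rule bij)
    fix y x assume "y \<in> h" "x \<in> ms i"
    then show "br V (br y x) = br y (br V x)" using comm by simp
  qed
  show ?thesis using part1 iso WJ2 unfolding W_def by blast
qed

end
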